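(* Let $n\ge 3$ and let $q$ be a real number with $0<q\le 1/6$. Consider the Markov chain on $\{0,1,\dots,n-1\}$ with $n\times n$ transition probability matrix $\mathbf P(q)=(P_{ij})$ given by: $P_{00}=1-q$, $P_{01}=q$; $P_{10}=5q$, $P_{11}=1-6q$, $P_{12}=q$; for $2\le i\le n-2$: $P_{i0}=4q$, $P_{i,i-1}=q$, $P_{ii}=1-6q$, $P_{i,i+1}=q$; $P_{n-1,0}=5q$, $P_{n-1,n-2}=q$, $P_{n-1,n-1}=1-6q$; all other entries $0$. Then the steady state probability vector $\vec\pi=(\pi_0,\dots,\pi_{n-1})$ (the unique probability vector with $\vec\pi=\vec\pi\mathbf P(q)$) is given by $\pi_i=\dfrac{2B_{n-i}}{b_{n+1}}=\dfrac{B_{n-i}}{\sum_{l=1}^n B_l}$ for $i=0,1,\dots,n-1$; in particular it does not depend on $q$.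
   Context: The balancing numbers $B_m$ are defined by $B_0=0$, $B_1=1$, $B_{m+1}=6B_m-B_{m-1}$. The cobalancing numbers $b_m$ are defined by $b_0=0$, $b_1=0$, $b_{m+1}=6b_m-b_{m-1}+2$. *)

theory Defs
  imports Complex_Main
begin

fun bal :: "nat \<Rightarrow> int" where
  "bal 0 = 0"
| "bal (Suc 0) = 1"
| "bal (Suc (Suc m)) = 6 * bal (Suc m) - bal m"

fun cobal :: "nat \<Rightarrow> int" where
  "cobal 0 = 0"
| "cobal (Suc 0) = 0"
| "cobal (Suc (Suc m)) = 6 * cobal (Suc m) - cobal m + 2"

text \<open>The n x n transition matrix P(q), indices i, j in {0..n-1}
  (entries outside this range are irrelevant and set to 0).\<close>
definition trans_mat :: "nat \<Rightarrow> real \<Rightarrow> nat \<Rightarrow> nat \<Rightarrow> real" where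
  "trans_mat n q i j =
    (if i = 0 then (if j = 0 then 1 - q else if j = 1 then q else 0)
     else if i = 1 then (if j = 0 then 5*q else if j = 1 then 1 - 6*q else if j = 2 then q else 0)
     else if i \<le> n - 2 then
       (if j = 0 then 4*q else if j = i - 1 then q else if j = i then 1 - 6*q
        else if j = i + 1 then q else 0)
     else if i = n - 1 then
       (if j = 0 then 5*q else if j = n - 2 then q else if j = n - 1 then 1 - 6*q else 0)
     else 0)"

definition prob_vec :: "nat \<Rightarrow> (nat \<Rightarrow> real) \<Rightarrow> bool" where
  "prob_vec n p \<longleftrightarrow> (\<forall>i<n. 0 \<le> p i) \<and> (\<Sum>i<n. p i) = 1"

definition stationary :: "nat \<Rightarrow> (nat \<Rightarrow> nat \<Rightarrow> real) \<Rightarrow> (nat \<Rightarrow> real) \<Rightarrow> bool" where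
  "stationary n P p \<longleftrightarrow> (\<forall>j<n. p j = (\<Sum>i<n. p i * P i j))"

end

theory Submission
  imports Defs
begin

lemma bal_mono: "0 \<le> bal m \<and> bal m \<le> bal (Suc m)"
proof (induction m rule: nat_less_induct)
  case (1 m)
  show ?case
  proof (cases m)
    case 0 then show ?thesis by simp
  next
    case (Suc k)
    then have "0 \<le> bal k \<and> bal k \<le> bal (Suc k)" using 1 by auto
    then show ?thesis using Suc by simp
  qed
qed

lemma bal_pos: "l \<ge> 1 \<Longrightarrow> bal l \<ge> 1"
proof (induction l)
  case 0 then show ?case by simp
next
  case (Suc l)
  then show ?case using bal_mono[of l] by (cases "l = 0") auto
qed

lemma bal_sum4: "bal (Suc m) - bal m - 1 = 4 * (\<Sum>l=1..m. bal l)"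
proof (induction m)
  case 0 then show ?case by simp
next
  case (Suc m)
  then show ?case by simp
qed

lemma cobal_sum: "cobal (Suc m) = 2 * (\<Sum>l=1..m. bal l)"
proof (induction m rule: nat_less_induct)
  case (1 m)
  show ?case
  proof (cases m)
    case 0 then show ?thesis by simp
  next
    case (Suc k)
    show ?thesis
    proof (cases k)
      case 0 then show ?thesis using Suc by simp
    next
      case (Suc k')
      have a: "cobal (Suc k) = 2 * (\<Sum>l=1..k. bal l)" using 1 \<open>m = Suc k\<close> by auto
      have b: "cobal (Suc k') = 2 * (\<Sum>l=1..k'. bal l)" using 1 \<open>m = Suc k\<close> Suc by auto
      have c: "bal (Suc (Suc k')) - bal (Suc k') - 1 = 4 * (\<Sum>l=1..Suc k'. bal l)"
        by (rule bal_sum4)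
      show ?thesis using a b c \<open>m = Suc k\<close> Suc by simp
    qed
  qed
qed

lemma sum_rev: "(\<Sum>i<(n::nat). f (n - i)) = (\<Sum>l=1..n. (f l :: real))"
proof (induction n)
  case 0 then show ?case by simp
next
  case (Suc n)
  have "(\<Sum>i<Suc n. f (Suc n - i)) = f (Suc n) + (\<Sum>i<n. f (n - i))"
    by (subst sum.lessThan_Suc_shift) simp
  then show ?case using Suc by simp
qed

lemma col:
  assumes "n \<ge> 3" "1 \<le> j" "j < n"
  shows "(\<Sum>i<n. p i * trans_mat n q i j) =
     (\<Sum>i<n. (if i = j - 1 then q * p (j-1) else 0) + (if i = j then (1-6*q) * p j else 0)
        + (if i = j + 1 then q * p (j+1) else 0))"
proof (rule sum.cong)
  fix i assume "i \<in> {..<n}"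
  then show "p i * trans_mat n q i j = (if i = j - 1 then q * p (j-1) else 0) + (if i = j then (1-6*q) * p j else 0)
        + (if i = j + 1 then q * p (j+1) else 0)"
  proof -
    have "i < n" using \<open>i \<in> {..<n}\<close> by simp
    then have "i = 0 \<or> i = 1 \<or> (2 \<le> i \<and> i \<le> n-2) \<or> i = n-1" by arith
    then show ?thesis
    proof (elim disjE)
      assume "i = 0" then show ?thesis using assms by (simp add: trans_mat_def)
    next
      assume "i = 1" then show ?thesis using assms by (auto simp add: trans_mat_def)
    next
      assume h: "2 \<le> i \<and> i \<le> n-2"
      have "j < i - 1 \<or> j = i - 1 \<or> j = i \<or> j = i + 1 \<or> j > i + 1" by arith
      then show ?thesis
      proof (elim disjE)
        assume jj: "j < i - 1"
        then have "j \<noteq> i - 1" "j \<noteq> i" "j \<noteq> i + 1" "j \<noteq> Suc i" "i \<noteq> j - 1" "i \<noteq> j + 1" "i \<noteq> Suc j" using h by auto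
        then show ?thesis using h assms jj by (simp add: trans_mat_def)
      next
        assume jj: "j = i - 1"
        moreover have "i \<noteq> i - 2" "i \<noteq> i - Suc (Suc 0)" "i - 1 \<noteq> i" "i - 1 \<noteq> i + 1" "i \<noteq> i + 1" "i - 1 \<noteq> 0" "i \<noteq> 0" "i + 1 \<noteq> 0" "i - Suc 0 \<noteq> Suc i" "i \<noteq> Suc i" using h by auto
        ultimately show ?thesis using h assms by (simp add: trans_mat_def)
      next
        assume jj: "j = i"
        moreover have "i \<noteq> i - 2" "i \<noteq> i - Suc (Suc 0)" "i - 1 \<noteq> i" "i - 1 \<noteq> i + 1" "i \<noteq> i + 1" "i - 1 \<noteq> 0" "i \<noteq> 0" "i + 1 \<noteq> 0" "i - Suc 0 \<noteq> Suc i" "i \<noteq> Suc i" using h by auto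
        ultimately show ?thesis using h assms by (simp add: trans_mat_def)
      next
        assume jj: "j = i + 1"
        moreover have "i \<noteq> i - 2" "i \<noteq> i - Suc (Suc 0)" "i - 1 \<noteq> i" "i - 1 \<noteq> i + 1" "i \<noteq> i + 1" "i - 1 \<noteq> 0" "i \<noteq> 0" "i + 1 \<noteq> 0" "i - Suc 0 \<noteq> Suc i" "i \<noteq> Suc i" using h by auto
        ultimately show ?thesis using h assms by (simp add: trans_mat_def)
      next
        assume jj: "j > i + 1"
        then have "j \<noteq> i - 1" "j \<noteq> i" "j \<noteq> i + 1" "j \<noteq> Suc i" "i \<noteq> j - 1" "i \<noteq> j + 1" "i \<noteq> Suc j" using h by auto
        then show ?thesis using h assms jj by (simp add: trans_mat_def)
      qed
    next
      assume ii: "i = n-1"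
      have f: "\<not> (n-1 \<le> n-2)" "n - 1 \<noteq> 1" "n-1 \<noteq> 0" "n-2 \<noteq> n-3" "n-1 \<noteq> n-3" "n-1 = Suc (n-2)" "n - 2 \<noteq> 0" "n - 2 \<noteq> n - 1"
        using assms by auto
      have "j = n - 2 \<or> j = n - 1 \<or> j < n - 2" using assms by arith
      then show ?thesis
      proof (elim disjE)
        assume jj: "j = n - 2"
        then have "j - 1 \<noteq> n - 1" "j + 1 = n - 1" "j \<noteq> n - 1" using assms by auto
        then show ?thesis using f ii jj assms by (simp add: trans_mat_def)
      next
        assume jj: "j = n - 1"
        then have "j - 1 \<noteq> n - 1" "j + 1 \<noteq> n - 1" "j = n - 1" using assms by auto
        then show ?thesis using f ii jj assms by (simp add: trans_mat_def)
      next
        assume jj: "j < n - 2"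
        then have "j - 1 \<noteq> n - 1" "j + 1 \<noteq> n - 1" "j \<noteq> n - 1" "j \<noteq> n - 2" "n - 1 \<noteq> j - 1" "n - 1 \<noteq> j + 1" "n - 1 \<noteq> j" "n - 1 \<noteq> Suc j" using assms by auto
        then show ?thesis using f ii jj assms by (simp add: trans_mat_def)
      qed
    qed
  qed
qed simp

lemma col':
  assumes "n \<ge> 3" "1 \<le> j" "j < n"
  shows "(\<Sum>i<n. p i * trans_mat n q i j) =
     q * p (j-1) + (1-6*q) * p j + (if j + 1 < n then q * p (j+1) else 0)"
proof -
  have "j - 1 < n" using assms by simp
  then show ?thesis using assms by (simp add: col sum.distrib)
qed

lemma col0:
  assumes "n \<ge> 3"
  shows "(\<Sum>i<n. p i * trans_mat n q i 0) =
     (\<Sum>i<n. 4*q * p i + (if i = 0 then (1-5*q) * p 0 else 0) + (if i = 1 then q * p 1 else 0)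
        + (if i = n - 1 then q * p (n-1) else 0))"
proof (rule sum.cong)
  fix i assume "i \<in> {..<n}"
  then show "p i * trans_mat n q i 0 = 4*q * p i + (if i = 0 then (1-5*q) * p 0 else 0) + (if i = 1 then q * p 1 else 0)
        + (if i = n - 1 then q * p (n-1) else 0)"
  proof -
    have "i < n" using \<open>i \<in> {..<n}\<close> by simp
    then have "i = 0 \<or> i = 1 \<or> (2 \<le> i \<and> i \<le> n-2) \<or> i = n-1" by arith
    moreover have f: "n - 1 \<noteq> 0" "n - 1 \<noteq> 1" "\<not> (n - 1 \<le> n - 2)" "(0::nat) \<noteq> n - 2" using assms by auto
    ultimately show ?thesis
    proof (elim disjE)
      assume "i = 0" then show ?thesis using f by (simp add: trans_mat_def algebra_simps)
    next
      assume "i = 1" then show ?thesis using f by (simp add: trans_mat_def algebra_simps)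
    next
      assume h: "2 \<le> i \<and> i \<le> n-2"
      then have "i \<noteq> 0" "i \<noteq> 1" "i \<noteq> n - 1" "i - 1 \<noteq> 0" by auto
      then show ?thesis using h f by (simp add: trans_mat_def algebra_simps)
    next
      assume "i = n-1" then show ?thesis using f by (simp add: trans_mat_def algebra_simps)
    qed
  qed
qed simp

lemma col0':
  assumes "n \<ge> 3"
  shows "(\<Sum>i<n. p i * trans_mat n q i 0) =
     4*q * (\<Sum>i<n. p i) + (1-5*q) * p 0 + q * p 1 + q * p (n-1)"
  using assms by (simp add: col0 sum.distrib sum_distrib_left)



lemma backward:
  assumes n3: "n \<ge> 3" and qpos: "0 < q" and st: "stationary n (trans_mat n q) p"
  shows "k < n \<Longrightarrow> p (n - 1 - k) = p (n - 1) * real_of_int (bal (k + 1))"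
proof (induction k rule: less_induct)
  case (less k)
  have eq: "\<And>j. j < n \<Longrightarrow> p j = (\<Sum>i<n. p i * trans_mat n q i j)"
    using st unfolding stationary_def by blast
  show ?case
  proof (cases k)
    case 0 then show ?thesis by simp
  next
    case (Suc k1)
    show ?thesis
    proof (cases k1)
      case 0
      have "p (n-1) = q * p (n-1-1) + (1-6*q) * p (n-1) + (if n - 1 + 1 < n then q * p (n-1+1) else 0)"
        using eq[of "n-1"] col'[of n "n-1" p q] n3 by simp
      moreover have "\<not> (n - 1 + 1 < n)" using n3 by simp
      ultimately have "p (n-1) = q * p (n-1-1) + (1-6*q) * p (n-1)" by simp
      then have "q * p (n-1-1) = q * (6 * p (n-1))" by algebra
      then have "p (n-1-1) = 6 * p (n-1)" using qpos by (metis mult_cancel_left less_irrefl)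
      moreover have "k = 1" using Suc 0 by simp
      ultimately show ?thesis by (simp add: numeral_2_eq_2)
    next
      case (Suc m)
      define j where "j = n - k"
      have k: "k = Suc (Suc m)" using \<open>k = Suc k1\<close> Suc by simp
      have j1: "1 \<le> j" "j + 1 < n" "j < n" using less.prems k j_def by auto
      have "p j = q * p (j-1) + (1-6*q) * p j + q * p (j+1)"
        using eq[of j] col'[of n j p q] n3 j1 by simp
      then have "q * p (j-1) = q * (6 * p j - p (j+1))" by (simp add: algebra_simps)
      then have e: "p (j-1) = 6 * p j - p (j+1)" using qpos by simp
      have i1: "n - 1 - Suc m = j" using j_def k by simp
      have i2: "n - 1 - m = j + 1" using j_def k less.prems by simp
      have "p (n - 1 - Suc m) = p (n-1) * real_of_int (bal (Suc m + 1))"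
        using less.IH[of "Suc m"] k less.prems by simp
      then have h1: "p j = p (n-1) * real_of_int (bal (Suc (Suc m)))" using i1 by simp
      have "p (n - 1 - m) = p (n-1) * real_of_int (bal (m + 1))"
        using less.IH[of m] k less.prems by simp
      then have h2: "p (j+1) = p (n-1) * real_of_int (bal (Suc m))" using i2 by simp
      have "n - 1 - k = j - 1" using j_def by simp
      then show ?thesis using e h1 h2 k by (simp add: algebra_simps)
    qed
  qed
qed

theorem theorem2p2:
  fixes n :: nat and q :: real
  assumes "n \<ge> 3" and "0 < q" and "q \<le> 1/6"
  shows "(\<forall>p :: nat \<Rightarrow> real.
            (prob_vec n p \<and> stationary n (trans_mat n q) p) \<longleftrightarrow>
            (\<forall>i<n. p i = 2 * real_of_int (bal (n - i)) / real_of_int (cobal (n + 1))))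
       \<and> (\<forall>i<n. 2 * real_of_int (bal (n - i)) / real_of_int (cobal (n + 1))
                 = real_of_int (bal (n - i)) / (\<Sum>l=1..n. real_of_int (bal l)))"
proof -
  define S where "S = (\<Sum>l=1..n. real_of_int (bal l))"
  have cS: "real_of_int (cobal (n + 1)) = 2 * S"
    unfolding S_def using cobal_sum[of n] by simp
  have "(\<Sum>l=1..n. bal l) \<ge> bal 1"
    by (rule member_le_sum) (use assms bal_mono in auto)
  then have "real_of_int 1 \<le> real_of_int (\<Sum>l=1..n. bal l)" by (simp only: bal.simps of_int_le_iff One_nat_def)
  moreover have "S = real_of_int (\<Sum>l=1..n. bal l)" unfolding S_def by simp
  ultimately have S1: "S \<ge> 1" by simp
  have part2: "\<forall>i<n. 2 * real_of_int (bal (n - i)) / real_of_int (cobal (n + 1))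
                 = real_of_int (bal (n - i)) / S"
    using cS by simp
  have sumB: "(\<Sum>i<n. real_of_int (bal (n - i))) = S"
    unfolding S_def by (rule sum_rev)
  have main: "(prob_vec n p \<and> stationary n (trans_mat n q) p) \<longleftrightarrow>
            (\<forall>i<n. p i = real_of_int (bal (n - i)) / S)" for p
  proof
    assume h: "prob_vec n p \<and> stationary n (trans_mat n q) p"
    have bk: "\<And>i. i < n \<Longrightarrow> p i = p (n-1) * real_of_int (bal (n - i))"
    proof -
      fix i assume "i < n"
      then have "p (n - 1 - (n-1-i)) = p (n - 1) * real_of_int (bal (n-1-i + 1))"
        using backward[of n q p "n-1-i"] h assms by simp
      moreover have "n - 1 - (n-1-i) = i" "n-1-i+1 = n-i" using \<open>i < n\<close> by auto
      ultimately show "p i = p (n-1) * real_of_int (bal (n - i))"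
        by simp
    qed
    have "1 = (\<Sum>i<n. p i)" using h unfolding prob_vec_def by simp
    also have "\<dots> = (\<Sum>i<n. p (n-1) * real_of_int (bal (n - i)))"
      by (rule sum.cong) (rule refl, rule bk, simp)
    also have "\<dots> = p (n-1) * S" unfolding sumB[symmetric] by (rule sum_distrib_left[symmetric])
    finally have "p (n-1) = 1 / S" using S1 by (simp add: field_simps)
    then show "\<forall>i<n. p i = real_of_int (bal (n - i)) / S"
    proof (intro allI impI)
      fix i assume "i < n"
      from bk[OF this] show "p i = real_of_int (bal (n - i)) / S" using \<open>p (n-1) = 1 / S\<close> by simp
    qed
  next
    assume h: "\<forall>i<n. p i = real_of_int (bal (n - i)) / S"
    have sum1: "(\<Sum>i<n. p i) = 1"
    proof -
      have "(\<Sum>i<n. p i) = (\<Sum>i<n. real_of_int (bal (n - i)) / S)"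
        using h by (intro sum.cong) auto
      also have "\<dots> = 1" using sumB S1 by (simp add: sum_divide_distrib[symmetric])
      finally show ?thesis .
    qed
    have "\<forall>i<n. 0 \<le> p i"
    proof (intro allI impI)
      fix i assume "i < n"
      then have "p i = real_of_int (bal (n - i)) / S" using h by simp
      moreover have "0 \<le> bal (n - i)" using bal_mono[of "n-i"] by simp
      ultimately show "0 \<le> p i" using S1 by simp
    qed
    then have pv: "prob_vec n p" unfolding prob_vec_def using sum1 by simp
    have "p j = (\<Sum>i<n. p i * trans_mat n q i j)" if j: "j < n" for j
    proof (cases "j = 0")
      case True
      obtain m where m: "n = Suc m" using assms by (cases n) auto
      define Bn where "Bn = real_of_int (bal n)"
      define Bm where "Bm = real_of_int (bal m)"
      define T where "T = (\<Sum>l=1..m. real_of_int (bal l))"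
      have s4: "bal n - bal m - 1 = 4 * (\<Sum>l=1..m. bal l)" using bal_sum4[of m] m by simp
      have Ssplit: "S = T + Bn"
        unfolding S_def T_def Bn_def m by simp
      have s4r: "Bn - Bm - 1 = 4 * T"
        using arg_cong[OF s4, of real_of_int] unfolding Bn_def Bm_def T_def by simp
      have p0: "p 0 = Bn / S" using h assms unfolding Bn_def by simp
      have p1: "p 1 = Bm / S" using h assms m unfolding Bm_def by simp
      have pn: "p (n-1) = 1 / S" using h assms by simp
      have c0: "(\<Sum>i<n. p i * trans_mat n q i j) = 4*q + (1-5*q) * p 0 + q * p 1 + q * p (n-1)"
        using col0'[of n p q] True assms sum1 by simp
      have e1: "4*q*S = q*(4*T) + 4*q*Bn" unfolding Ssplit by (simp add: algebra_simps)
      have e2: "q*(4*T) = q*Bn - q*Bm - q" unfolding s4r[symmetric] by (simp add: algebra_simps)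
      have key: "4*q*S + (1-5*q)*Bn + q*Bm + q = Bn" using e1 e2 by (simp add: algebra_simps)
      have "4*q + (1-5*q) * (Bn / S) + q * (Bm / S) + q * (1 / S) = (4*q*S + (1-5*q)*Bn + q*Bm + q) / S"
        using S1 by (simp add: field_simps)
      also have "\<dots> = Bn / S" using key by simp
      finally show ?thesis using True c0 p0 p1 pn by simp
    next
      case False
      then have j1: "1 \<le> j" by simp
      have c: "(\<Sum>i<n. p i * trans_mat n q i j) =
        q * p (j-1) + (1-6*q) * p j + (if j + 1 < n then q * p (j+1) else 0)"
        using col'[of n j p q] assms j1 j by simp
      show ?thesis
      proof (cases "j + 1 < n")
        case True
        obtain m where m: "n - j - 1 = m" by simp
        have e1: "n - (j-1) = Suc (Suc m)" "n - j = Suc m" "n - (j+1) = m" using m True j1 by auto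
        have pa: "p (j-1) = real_of_int (bal (Suc (Suc m))) / S" using h j e1 by simp
        have pb: "p j = real_of_int (bal (Suc m)) / S" using h j e1 by simp
        have pc: "p (j+1) = real_of_int (bal m) / S" using h True e1 by simp
        have rec: "real_of_int (bal (Suc (Suc m))) = 6 * real_of_int (bal (Suc m)) - real_of_int (bal m)"
          by simp
        have "q * p (j-1) + (1-6*q) * p j + q * p (j+1)
            = (q * real_of_int (bal (Suc (Suc m))) + (1-6*q) * real_of_int (bal (Suc m)) + q * real_of_int (bal m)) / S"
          unfolding pa pb pc by (simp add: add_divide_distrib)
        also have "\<dots> = real_of_int (bal (Suc m)) / S" unfolding rec by (simp add: algebra_simps)
        finally show ?thesis using c True pb by simp
      next
        case False
        then have jn: "j = n - 1" using j by simp
        have e1: "n - (j-1) = 2" "n - j = 1" using jn assms by auto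
        have pa: "p (j-1) = 6 / S" using h j e1 by (simp add: numeral_2_eq_2)
        have pb: "p j = 1 / S" using h j e1 by simp
        have "q * p (j-1) + (1-6*q) * p j = p j"
          unfolding pa pb using S1 by (simp add: field_simps)
        then show ?thesis using c False by simp
      qed
    qed
    then show "prob_vec n p \<and> stationary n (trans_mat n q) p"
      using pv unfolding stationary_def by blast
  qed
  show ?thesis using main part2 unfolding S_def by simp
qed

end
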